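(* Let $G$ be a $\sigma$-compact locally compact Abelian group, $C>0$, and $\{P_\varepsilon\}_{0<\varepsilon<C}$ a family of subsets of $G$ satisfying: (A1) $0\in P_\varepsilon=-P_\varepsilon$ for all $0<\varepsilon<C$; (A2) each $P_\varepsilon$ is locally finite; (A3) $P_\varepsilon+P_{\varepsilon'}\subset P_{\varepsilon+\varepsilon'}$ whenever $\varepsilon+\varepsilon'<C$; (A4) each $P_\varepsilon$ is relatively dense. Then for every $0<\varepsilon<C$ the set $P_\varepsilon+\bigcap_{0<\varepsilon'<C}P_{\varepsilon'}$ is a model set. In particular, if $\bigcap_{0<\varepsilon'<C}P_{\varepsilon'}=\{0\}$, then every $P_\varepsilon$, $0<\varepsilon<C$, is a model set.
   Context: Locally finite: finite intersection with every compact set. Relatively dense: $A+K=G$ for some compact $K$. A cut and project scheme $(G\times H,\widetilde L)$: $H$ a locally compact Abelian group, $\widetilde L\subset G\times H$ a lattice (discrete, cocompact subgroup) such that $\pi_1|_{\widetilde L}$ is injective and $\pi_2(\widetilde L)$ is dense in $H$; for $x\in\pi_1(\widetilde L)$, $x^\star:=\pi_2((\pi_1|_{\widetilde L})^{-1}(x))$. For $W\subset H$, $\Lambda(W):=\{x\in\pi_1(\widetilde L): x^\star\in W\}$. A model set is a set of the form $\Lambda(W)$ for some cut and project scheme and some precompact $W\subset H$ with nonempty interior. *)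

theory Defs
  imports "HOL-Analysis.Analysis"
begin

definition sigma_compact_lca_group :: "'a::{topological_space, ab_group_add} itself \<Rightarrow> bool" where
  "sigma_compact_lca_group _ \<longleftrightarrow>
     continuous_on UNIV (\<lambda>p::'a \<times> 'a. fst p + snd p) \<and>
     continuous_on UNIV (\<lambda>x::'a. - x) \<and>
     Hausdorff_space (euclidean :: 'a topology) \<and>
     locally_compact_space (euclidean :: 'a topology) \<and>
     (\<exists>K :: nat \<Rightarrow> 'a set. (\<forall>n. compact (K n)) \<and> (\<Union>n. K n) = UNIV)"

definition sumset :: "'a::plus set \<Rightarrow> 'a set \<Rightarrow> 'a set" where
  "sumset A B = {a + b | a b. a \<in> A \<and> b \<in> B}"

definition locally_finite_set :: "'a::topological_space set \<Rightarrow> bool" where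
  "locally_finite_set A \<longleftrightarrow> (\<forall>K. compact K \<longrightarrow> finite (A \<inter> K))"

definition relatively_dense :: "'a::{topological_space, plus} set \<Rightarrow> bool" where
  "relatively_dense A \<longleftrightarrow> (\<exists>K. compact K \<and> sumset A K = UNIV)"

definition lca_group_on :: "'h topology \<Rightarrow> ('h \<Rightarrow> 'h \<Rightarrow> 'h) \<Rightarrow> ('h \<Rightarrow> 'h) \<Rightarrow> 'h \<Rightarrow> bool" where
  "lca_group_on T add neg z \<longleftrightarrow>
     z \<in> topspace T \<and>
     (\<forall>x\<in>topspace T. \<forall>y\<in>topspace T. add x y \<in> topspace T) \<and>
     (\<forall>x\<in>topspace T. neg x \<in> topspace T) \<and>
     (\<forall>x\<in>topspace T. \<forall>y\<in>topspace T. \<forall>w\<in>topspace T. add (add x y) w = add x (add y w)) \<and>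
     (\<forall>x\<in>topspace T. \<forall>y\<in>topspace T. add x y = add y x) \<and>
     (\<forall>x\<in>topspace T. add z x = x) \<and>
     (\<forall>x\<in>topspace T. add (neg x) x = z) \<and>
     continuous_map (prod_topology T T) T (\<lambda>p. add (fst p) (snd p)) \<and>
     continuous_map T T neg \<and>
     Hausdorff_space T \<and>
     locally_compact_space T"

definition cut_and_project_scheme ::
  "'h topology \<Rightarrow> ('h \<Rightarrow> 'h \<Rightarrow> 'h) \<Rightarrow> ('h \<Rightarrow> 'h) \<Rightarrow> 'h \<Rightarrow> ('a::{topological_space, ab_group_add} \<times> 'h) set \<Rightarrow> bool" where
  "cut_and_project_scheme T add neg z L \<longleftrightarrow>
     L \<subseteq> UNIV \<times> topspace T \<and>
     (0, z) \<in> L \<and>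
     (\<forall>p\<in>L. \<forall>q\<in>L. (fst p + fst q, add (snd p) (snd q)) \<in> L) \<and>
     (\<forall>p\<in>L. (- fst p, neg (snd p)) \<in> L) \<and>
     (\<forall>p\<in>L. \<exists>U. openin (prod_topology euclidean T) U \<and> U \<inter> L = {p}) \<and>
     (\<exists>K. compactin (prod_topology euclidean T) K \<and>
        (\<forall>q \<in> UNIV \<times> topspace T. \<exists>l\<in>L. \<exists>k\<in>K. q = (fst l + fst k, add (snd l) (snd k)))) \<and>
     inj_on fst L \<and>
     T closure_of (snd ` L) = topspace T"

definition star_map :: "('a \<times> 'h) set \<Rightarrow> 'a \<Rightarrow> 'h" where
  "star_map L x = snd (THE l. l \<in> L \<and> fst l = x)"

definition window_set :: "('a \<times> 'h) set \<Rightarrow> 'h set \<Rightarrow> 'a set" where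
  "window_set L W = {x \<in> fst ` L. star_map L x \<in> W}"

definition model_set :: "'a::{topological_space, ab_group_add} set \<Rightarrow> bool" where
  "model_set A \<longleftrightarrow>
     (\<exists>(T :: 'a set set topology) add neg z L W.
        lca_group_on T add neg z \<and>
        cut_and_project_scheme T add neg z L \<and>
        W \<subseteq> topspace T \<and>
        compactin T (T closure_of W) \<and>
        T interior_of W \<noteq> {} \<and>
        A = window_set L W)"

end

theory Submission
  imports Defs
begin


lemma sumsetI: "a \<in> A \<Longrightarrow> b \<in> B \<Longrightarrow> a + b \<in> sumset A B"
  unfolding sumset_def by blast

lemma sumsetE: "z \<in> sumset A B \<Longrightarrow> (\<And>a b. a \<in> A \<Longrightarrow> b \<in> B \<Longrightarrow> z = a + b \<Longrightarrow> thesis) \<Longrightarrow> thesis"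
  unfolding sumset_def by blast

lemma le_eps_real: "(\<And>e::real. 0 < e \<Longrightarrow> x \<le> y + e) \<Longrightarrow> x \<le> y"
  by (rule field_le_epsilon) auto

locale cps =
  fixes P :: "real \<Rightarrow> 'a::{topological_space, ab_group_add} set" and C :: real
  assumes G: "sigma_compact_lca_group TYPE('a)"
    and C: "C > 0"
    and A1: "\<And>e. 0 < e \<Longrightarrow> e < C \<Longrightarrow> 0 \<in> P e \<and> uminus ` P e = P e"
    and A2: "\<And>e. 0 < e \<Longrightarrow> e < C \<Longrightarrow> locally_finite_set (P e)"
    and A3: "\<And>e e'. 0 < e \<Longrightarrow> 0 < e' \<Longrightarrow> e + e' < C \<Longrightarrow> sumset (P e) (P e') \<subseteq> P (e + e')"
    and A4: "\<And>e. 0 < e \<Longrightarrow> e < C \<Longrightarrow> relatively_dense (P e)"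
begin

lemma P0: "0 < e \<Longrightarrow> e < C \<Longrightarrow> 0 \<in> P e" using A1 by blast

lemma Pneg: "0 < e \<Longrightarrow> e < C \<Longrightarrow> x \<in> P e \<Longrightarrow> - x \<in> P e"
  using A1[of e] by (metis image_eqI)

lemma Padd: "0 < e \<Longrightarrow> 0 < e' \<Longrightarrow> e + e' < C \<Longrightarrow> x \<in> P e \<Longrightarrow> y \<in> P e' \<Longrightarrow> x + y \<in> P (e + e')"
  using A3 sumsetI by blast

lemma Pmono: assumes "0 < e" "e \<le> e'" "e' < C" "x \<in> P e" shows "x \<in> P e'"
proof (cases "e = e'")
  case False
  then have "x + 0 \<in> P (e + (e' - e))"
    using assms by (intro Padd P0) auto
  then show ?thesis by simp
qed (use assms in simp)

definition D0 :: "'a \<Rightarrow> real" where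
  "D0 w = Inf (insert C {e. 0 < e \<and> e < C \<and> w \<in> P e})"

lemma D0_bdd: "bdd_below (insert C {e. 0 < e \<and> e < C \<and> w \<in> P e})"
  by (rule bdd_belowI[of _ 0]) (use C in auto)

lemma D0_nonneg: "0 \<le> D0 w"
  unfolding D0_def by (rule cInf_greatest) (use C in auto)

lemma D0_le_C: "D0 w \<le> C"
  unfolding D0_def by (rule cInf_lower[OF _ D0_bdd]) auto

lemma D0_le: "0 < e \<Longrightarrow> e < C \<Longrightarrow> w \<in> P e \<Longrightarrow> D0 w \<le> e"
  unfolding D0_def by (rule cInf_lower[OF _ D0_bdd]) auto

lemma D0_lt: assumes "D0 w < s" "s < C" shows "w \<in> P s"
proof -
  obtain e where "e \<in> insert C {e. 0 < e \<and> e < C \<and> w \<in> P e}" "e < s"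
    using cInf_lessD[of "insert C {e. 0 < e \<and> e < C \<and> w \<in> P e}" s] assms unfolding D0_def by auto
  then show ?thesis using assms Pmono[of e s w] by auto
qed

lemma D0_zero_le: "(\<And>e. 0 < e \<Longrightarrow> e < C \<Longrightarrow> w \<in> P e) \<Longrightarrow> D0 w = 0"
proof -
  assume h: "\<And>e. 0 < e \<Longrightarrow> e < C \<Longrightarrow> w \<in> P e"
  have "D0 w \<le> 0 + t" if "t > 0" for t
  proof -
    have "D0 w \<le> min t (C/2)" using h[of "min t (C/2)"] D0_le[of "min t (C/2)" w] that C by auto
    then show ?thesis by linarith
  qed
  then have "D0 w \<le> 0" by (rule le_eps_real)
  then show ?thesis using D0_nonneg by (simp add: order_antisym)
qed

lemma D0_0 [simp]: "D0 0 = 0"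
  by (rule D0_zero_le) (rule P0)

lemma D0_uminus: "D0 (- w) = D0 w"
proof -
  have "{e. 0 < e \<and> e < C \<and> - w \<in> P e} = {e. 0 < e \<and> e < C \<and> w \<in> P e}"
    using Pneg by fastforce
  then show ?thesis by (simp add: D0_def)
qed

lemma D0_add: "D0 (v + w) \<le> D0 v + D0 w"
proof (cases "D0 v + D0 w < C")
  case False then show ?thesis using D0_le_C[of "v+w"] by linarith
next
  case True
  note lt = True
  show ?thesis
  proof (rule le_eps_real)
    fix e :: real assume e: "0 < e"
    define t where "t = min (e/2) ((C - D0 v - D0 w)/4)"
    have t0: "t \<le> (C - D0 v - D0 w)/4" unfolding t_def by (rule min.cobounded2)
    have t0': "4*t \<le> C - D0 v - D0 w" using t0 by (simp add: field_simps)
    have t1: "t \<le> e/2" unfolding t_def by (rule min.cobounded1)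
    have t2: "t > 0" using e lt unfolding t_def by simp
    have t: "t > 0" "2*t \<le> e" "D0 v + D0 w + 3 * t < C" using t0' t1 t2 lt by linarith+
    have "v \<in> P (D0 v + t)" by (rule D0_lt) (use t D0_nonneg[of w] in auto)
    moreover have "w \<in> P (D0 w + t)" by (rule D0_lt) (use t D0_nonneg[of v] in auto)
    ultimately have "v + w \<in> P (D0 v + t + (D0 w + t))"
      by (intro Padd) (use t D0_nonneg[of v] D0_nonneg[of w] in auto)
    then have "D0 (v + w) \<le> D0 v + t + (D0 w + t)"
      by (intro D0_le) (use t D0_nonneg[of v] D0_nonneg[of w] in auto)
    then show "D0 (v + w) \<le> D0 v + D0 w + e" using t by linarith
  qed
qed

lemma D0_diff_commute: "D0 (x - y) = D0 (y - x)"
  by (metis D0_uminus minus_diff_eq)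

lemma D0_tri: "D0 (x - z) \<le> D0 (x - y) + D0 (y - z)"
  using D0_add[of "x - y" "y - z"] by simp

lemma D0_eq0_iff: "D0 w = 0 \<longleftrightarrow> (\<forall>e. 0 < e \<and> e < C \<longrightarrow> w \<in> P e)"
  using D0_zero_le D0_lt by auto

end


context cps
begin

definition dxf :: "'a \<Rightarrow> 'a \<Rightarrow> real" where "dxf x = (\<lambda>y. D0 (x - y))"

definition close :: "('a \<Rightarrow> real) \<Rightarrow> ('a \<Rightarrow> real) \<Rightarrow> real \<Rightarrow> bool" where
  "close f g e \<longleftrightarrow> (\<forall>y. \<bar>f y - g y\<bar> \<le> e)"

definition HH :: "('a \<Rightarrow> real) set" where
  "HH = {f. \<forall>e>0. \<exists>x. close f (dxf x) e}"

lemma close_sym: "close f g e \<Longrightarrow> close g f e"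
  by (simp add: close_def abs_minus_commute)

lemma close_trans: assumes "close f g a" "close g h b" shows "close f h (a + b)"
  unfolding close_def
proof
  fix y
  have "\<bar>f y - g y\<bar> \<le> a" "\<bar>g y - h y\<bar> \<le> b" using assms by (auto simp: close_def)
  then show "\<bar>f y - h y\<bar> \<le> a + b" by linarith
qed

lemma close_mono: assumes "close f g a" "a \<le> b" shows "close f g b"
  using assms unfolding close_def by (meson order_trans)

lemma close_refl: "close f f 0"
  by (simp add: close_def)

lemma close_eq: assumes "\<And>e. e > 0 \<Longrightarrow> close f g e" shows "f = g"
proof
  fix y
  have "\<bar>f y - g y\<bar> \<le> 0 + e" if "e > 0" for e using assms[OF that] by (simp add: close_def)
  then have "\<bar>f y - g y\<bar> \<le> 0" by (rule le_eps_real)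
  then show "f y = g y" by simp
qed

lemma close_approx_eq:
  assumes "\<And>e. e > 0 \<Longrightarrow> \<exists>h. close f h e \<and> close g h e" shows "f = g"
proof (rule close_eq)
  fix e :: real assume "e > 0"
  then obtain h where "close f h (e/2)" "close g h (e/2)" using assms[of "e/2"] by auto
  then show "close f g e" using close_trans[of f h "e/2" g "e/2"] close_sym by fastforce
qed

lemma dxf_in_HH: "dxf x \<in> HH"
  unfolding HH_def
proof (intro CollectI allI impI)
  fix e :: real assume "e > 0"
  have "close (dxf x) (dxf x) e" by (rule close_mono[OF close_refl]) (use \<open>e > 0\<close> in simp)
  then show "\<exists>y. close (dxf x) (dxf y) e" by blast
qed

lemma HH_approx: "f \<in> HH \<Longrightarrow> e > 0 \<Longrightarrow> \<exists>x. close f (dxf x) e"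
  unfolding HH_def by blast

lemma HH_closed_lim:
  assumes "\<And>e. e > 0 \<Longrightarrow> \<exists>g\<in>HH. close f g e" shows "f \<in> HH"
  unfolding HH_def
proof (intro CollectI allI impI)
  fix e :: real assume "e > 0"
  then obtain g where "g \<in> HH" "close f g (e/2)" using assms[of "e/2"] by auto
  moreover obtain x where "close g (dxf x) (e/2)" using HH_approx[OF \<open>g \<in> HH\<close>, of "e/2"] \<open>e > 0\<close> by auto
  ultimately show "\<exists>x. close f (dxf x) e" using close_trans by fastforce
qed

lemma HH_nonneg: assumes "f \<in> HH" shows "0 \<le> f y"
proof -
  have "0 \<le> f y + e" if ep: "e > 0" for e
  proof -
    obtain x where "close f (dxf x) e" using HH_approx assms ep by blast
    then have "\<bar>f y - D0 (x - y)\<bar> \<le> e" using \<open>close f (dxf x) e\<close> unfolding close_def dxf_def by blast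
    then show ?thesis using D0_nonneg[of "x - y"] by linarith
  qed
  then show ?thesis using le_eps_real[of "- f y" 0] by force
qed

lemma HH_le: assumes "f \<in> HH" shows "f y \<le> C"
proof -
  have "f y \<le> C + e" if ep: "e > 0" for e
  proof -
    obtain x where "close f (dxf x) e" using HH_approx assms ep by blast
    then have "\<bar>f y - D0 (x - y)\<bar> \<le> e" using \<open>close f (dxf x) e\<close> unfolding close_def dxf_def by blast
    then show ?thesis using D0_le_C[of "x - y"] by linarith
  qed
  then show ?thesis by (rule le_eps_real)
qed

lemma HH_lip: assumes "f \<in> HH" shows "f z \<le> f y + D0 (y - z)"
proof -
  have "f z \<le> f y + D0 (y - z) + e" if ep: "e > 0" for e
  proof -
    obtain x where "close f (dxf x) (e/2)" using HH_approx assms ep by (meson half_gt_zero)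
    then have "\<bar>f z - D0 (x - z)\<bar> \<le> e/2" "\<bar>f y - D0 (x - y)\<bar> \<le> e/2"
      unfolding close_def dxf_def by blast+
    then show ?thesis using D0_tri[of x z y] by linarith
  qed
  then show ?thesis by (rule le_eps_real)
qed

lemma HH_tri: assumes "f \<in> HH" shows "D0 (y - z) \<le> f y + f z"
proof -
  have "D0 (y - z) \<le> f y + f z + e" if ep: "e > 0" for e
  proof -
    obtain x where "close f (dxf x) (e/2)" using HH_approx assms ep by (meson half_gt_zero)
    then have "\<bar>f z - D0 (x - z)\<bar> \<le> e/2" "\<bar>f y - D0 (x - y)\<bar> \<le> e/2"
      unfolding close_def dxf_def by blast+
    then show ?thesis using D0_tri[of y z x] D0_diff_commute[of y x] by linarith
  qed
  then show ?thesis by (rule le_eps_real)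
qed

lemma HH_inf: assumes "f \<in> HH" "e > 0" shows "\<exists>y. f y \<le> e"
proof -
  obtain x where "close f (dxf x) e" using HH_approx assms by blast
  then have "\<bar>f x - D0 (x - x)\<bar> \<le> e" using \<open>close f (dxf x) e\<close> unfolding close_def dxf_def by blast
  then have "f x \<le> e" by simp
  then show ?thesis by blast
qed

definition hdist :: "('a \<Rightarrow> real) \<Rightarrow> ('a \<Rightarrow> real) \<Rightarrow> real" where
  "hdist f g = Sup (range (\<lambda>y. \<bar>f y - g y\<bar>))"

lemma hdist_bdd: "f \<in> HH \<Longrightarrow> g \<in> HH \<Longrightarrow> bdd_above (range (\<lambda>y. \<bar>f y - g y\<bar>))"
proof (rule bdd_aboveI[of _ C], clarsimp)
  fix y assume "f \<in> HH" "g \<in> HH"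
  then show "\<bar>f y - g y\<bar> \<le> C" using HH_nonneg[of f y] HH_le[of f y] HH_nonneg[of g y] HH_le[of g y]
    by linarith
qed

lemma hdist_ge: "f \<in> HH \<Longrightarrow> g \<in> HH \<Longrightarrow> \<bar>f y - g y\<bar> \<le> hdist f g"
  unfolding hdist_def by (rule cSup_upper[OF _ hdist_bdd]) auto

lemma hdist_le: "close f g e \<Longrightarrow> hdist f g \<le> e"
  unfolding hdist_def close_def by (rule cSup_least) blast+

lemma close_hdist: "f \<in> HH \<Longrightarrow> g \<in> HH \<Longrightarrow> close f g (hdist f g)"
  unfolding close_def using hdist_ge by blast

lemma hdist_nonneg: "f \<in> HH \<Longrightarrow> g \<in> HH \<Longrightarrow> 0 \<le> hdist f g"
  using hdist_ge[of f g undefined] by linarith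

lemma hdist_commute: "hdist f g = hdist g f"
  unfolding hdist_def by (rule arg_cong[where f=Sup], rule arg_cong[where f=range], rule ext, rule abs_minus_commute)

lemma hdist_zero: assumes "f \<in> HH" "g \<in> HH" shows "hdist f g = 0 \<longleftrightarrow> f = g"
proof
  assume "hdist f g = 0"
  then have "close f g 0" using close_hdist[OF assms] by simp
  then show "f = g" by (intro close_eq) (rule close_mono[OF \<open>close f g 0\<close>], simp)
next
  assume "f = g"
  have "hdist g g \<le> 0" by (rule hdist_le[OF close_refl])
  then have "hdist g g = 0" using hdist_nonneg[OF assms(2) assms(2)] by linarith
  then show "hdist f g = 0" using \<open>f = g\<close> by simp
qed

lemma hdist_triangle: "f \<in> HH \<Longrightarrow> g \<in> HH \<Longrightarrow> h \<in> HH \<Longrightarrow> hdist f h \<le> hdist f g + hdist g h"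
  by (rule hdist_le, rule close_trans, rule close_hdist, assumption+, rule close_hdist, assumption+)

lemma hdist_dxf: "hdist (dxf x) (dxf y) = D0 (x - y)"
proof (rule order_antisym)
  show "hdist (dxf x) (dxf y) \<le> D0 (x - y)"
    unfolding close_def dxf_def
  proof (rule hdist_le, unfold close_def dxf_def, intro allI)
    fix z
    show "\<bar>D0 (x - z) - D0 (y - z)\<bar> \<le> D0 (x - y)"
      using D0_tri[of x z y] D0_tri[of y z x] D0_diff_commute[of x y] by linarith
  qed
  have "\<bar>dxf x y - dxf y y\<bar> \<le> hdist (dxf x) (dxf y)" by (rule hdist_ge[OF dxf_in_HH dxf_in_HH])
  moreover have "dxf x y - dxf y y = D0 (x - y)" by (simp add: dxf_def)
  ultimately show "D0 (x - y) \<le> hdist (dxf x) (dxf y)" using D0_nonneg[of "x-y"] by simp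
qed

end


context cps
begin

definition nn :: "('a \<Rightarrow> real) \<Rightarrow> bool" where "nn f \<longleftrightarrow> (\<forall>y. 0 \<le> f y)"

definition cnv :: "('a \<Rightarrow> real) \<Rightarrow> ('a \<Rightarrow> real) \<Rightarrow> 'a \<Rightarrow> real" where
  "cnv f g = (\<lambda>z. Inf (range (\<lambda>u. f u + g (z - u))))"

definition ngf :: "('a \<Rightarrow> real) \<Rightarrow> 'a \<Rightarrow> real" where
  "ngf f = (\<lambda>z. f (- z))"

lemma nn_HH: "f \<in> HH \<Longrightarrow> nn f"
  unfolding nn_def using HH_nonneg by blast

lemma nn_dxf: "nn (dxf x)"
  unfolding nn_def dxf_def using D0_nonneg by blast

lemma cnv_le: assumes "nn f" "nn g" shows "cnv f g z \<le> f u + g (z - u)"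
proof -
  have "bdd_below (range (\<lambda>u. f u + g (z - u)))"
    using assms unfolding nn_def by (intro bdd_belowI[of _ 0]) (auto intro: add_nonneg_nonneg)
  then show ?thesis unfolding cnv_def by (rule cInf_lower[rotated]) simp
qed

lemma cnv_ge: assumes "\<And>u. c \<le> f u + g (z - u)" shows "c \<le> cnv f g z"
  unfolding cnv_def by (rule cInf_greatest) (use assms in auto)

lemma cnv_nn: "nn f \<Longrightarrow> nn g \<Longrightarrow> nn (cnv f g)"
  unfolding nn_def by (auto intro!: cnv_ge add_nonneg_nonneg)

lemma cnv_close:
  assumes nn: "nn f" "nn f'" "nn g" "nn g'" and c: "close f f' a" "close g g' b"
  shows "close (cnv f g) (cnv f' g') (a + b)"
proof -
  have *: "cnv f g z \<le> cnv f' g' z + (a + b)"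
    if "nn f" "nn f'" "nn g" "nn g'" "close f f' a" "close g g' b" for f f' g g' z
  proof -
    have "cnv f g z - (a + b) \<le> cnv f' g' z"
    proof (rule cnv_ge)
      fix u
      have "cnv f g z \<le> f u + g (z - u)" by (rule cnv_le) (use that in auto)
      moreover have "\<bar>f u - f' u\<bar> \<le> a" "\<bar>g (z - u) - g' (z - u)\<bar> \<le> b"
        using that unfolding close_def by blast+
      ultimately show "cnv f g z - (a + b) \<le> f' u + g' (z - u)" by linarith
    qed
    then show ?thesis by linarith
  qed
  show ?thesis unfolding close_def
  proof
    fix z
    have "cnv f g z \<le> cnv f' g' z + (a + b)" by (rule *) (use assms in auto)
    moreover have "cnv f' g' z \<le> cnv f g z + (a + b)"
      by (rule *) (use assms close_sym in auto)
    ultimately show "\<bar>cnv f g z - cnv f' g' z\<bar> \<le> a + b" by linarith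
  qed
qed

lemma cnv_dxf: "cnv (dxf x) (dxf y) = dxf (x + y)"
proof
  fix z
  show "cnv (dxf x) (dxf y) z = dxf (x + y) z"
  proof (rule order_antisym)
    have "cnv (dxf x) (dxf y) z \<le> dxf x x + dxf y (z - x)" by (rule cnv_le[OF nn_dxf nn_dxf])
    also have "\<dots> = dxf (x + y) z" by (simp add: dxf_def algebra_simps)
    finally show "cnv (dxf x) (dxf y) z \<le> dxf (x + y) z" .
    show "dxf (x + y) z \<le> cnv (dxf x) (dxf y) z"
    proof (rule cnv_ge)
      fix u
      have eq: "x + y - z = (x - u) + (y - (z - u))" by (simp add: algebra_simps)
      show "dxf (x + y) z \<le> dxf x u + dxf y (z - u)"
        unfolding dxf_def by (simp only: eq) (rule D0_add)
    qed
  qed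
qed

lemma ngf_dxf: "ngf (dxf x) = dxf (- x)"
proof
  fix z
  have "- x - z = - (x - - z)" by simp
  then show "ngf (dxf x) z = dxf (- x) z" unfolding ngf_def dxf_def using D0_uminus by metis
qed

lemma close_ngf: "close f g a \<Longrightarrow> close (ngf f) (ngf g) a"
  unfolding close_def ngf_def by blast

lemma nn_ngf: "nn f \<Longrightarrow> nn (ngf f)"
  unfolding nn_def ngf_def by blast

lemma cnv_HH: assumes "f \<in> HH" "g \<in> HH" shows "cnv f g \<in> HH"
proof (rule HH_closed_lim)
  fix e :: real assume e: "e > 0"
  obtain x where x: "close f (dxf x) (e/2)" using HH_approx[OF assms(1), of "e/2"] e by auto
  obtain y where y: "close g (dxf y) (e/2)" using HH_approx[OF assms(2), of "e/2"] e by auto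
  have "close (cnv f g) (cnv (dxf x) (dxf y)) (e/2 + e/2)"
    by (rule cnv_close[OF nn_HH[OF assms(1)] nn_dxf nn_HH[OF assms(2)] nn_dxf x y])
  then have "close (cnv f g) (dxf (x + y)) e" by (simp add: cnv_dxf)
  then show "\<exists>k\<in>HH. close (cnv f g) k e" using dxf_in_HH by blast
qed

lemma ngf_HH: assumes "f \<in> HH" shows "ngf f \<in> HH"
proof (rule HH_closed_lim)
  fix e :: real assume e: "e > 0"
  obtain x where x: "close f (dxf x) e" using HH_approx[OF assms(1), of e] e by auto
  then have "close (ngf f) (dxf (- x)) e" using close_ngf ngf_dxf by metis
  then show "\<exists>g\<in>HH. close (ngf f) g e" using dxf_in_HH by blast
qed

lemma cnv_assoc: assumes "f \<in> HH" "g \<in> HH" "h \<in> HH"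
  shows "cnv (cnv f g) h = cnv f (cnv g h)"
proof (rule close_approx_eq)
  fix e :: real assume e: "e > 0"
  obtain x where x: "close f (dxf x) (e/3)" using HH_approx[OF assms(1), of "e/3"] e by auto
  obtain y where y: "close g (dxf y) (e/3)" using HH_approx[OF assms(2), of "e/3"] e by auto
  obtain w where w: "close h (dxf w) (e/3)" using HH_approx[OF assms(3), of "e/3"] e by auto
  note nns = nn_HH[OF assms(1)] nn_HH[OF assms(2)] nn_HH[OF assms(3)] nn_dxf
  have "close (cnv f g) (cnv (dxf x) (dxf y)) (e/3 + e/3)"
    by (rule cnv_close[OF nns(1) nn_dxf nns(2) nn_dxf x y])
  then have "close (cnv (cnv f g) h) (cnv (cnv (dxf x) (dxf y)) (dxf w)) ((e/3 + e/3) + e/3)"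
    by (intro cnv_close[OF _ _ nns(3) nn_dxf _ w] cnv_nn nns nn_dxf)
  then have 1: "close (cnv (cnv f g) h) (dxf (x + y + w)) e" by (simp add: cnv_dxf)
  have "close (cnv g h) (cnv (dxf y) (dxf w)) (e/3 + e/3)"
    by (rule cnv_close[OF nns(2) nn_dxf nns(3) nn_dxf y w])
  then have "close (cnv f (cnv g h)) (cnv (dxf x) (cnv (dxf y) (dxf w))) (e/3 + (e/3 + e/3))"
    by (intro cnv_close[OF nns(1) nn_dxf _ _ x] cnv_nn nns nn_dxf)
  then have 2: "close (cnv f (cnv g h)) (dxf (x + y + w)) e" by (simp add: cnv_dxf add.assoc)
  show "\<exists>k. close (cnv (cnv f g) h) k e \<and> close (cnv f (cnv g h)) k e" using 1 2 by blast
qed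

lemma cnv_comm: assumes "f \<in> HH" "g \<in> HH" shows "cnv f g = cnv g f"
proof (rule close_approx_eq)
  fix e :: real assume e: "e > 0"
  obtain x where x: "close f (dxf x) (e/2)" using HH_approx[OF assms(1), of "e/2"] e by auto
  obtain y where y: "close g (dxf y) (e/2)" using HH_approx[OF assms(2), of "e/2"] e by auto
  note nns = nn_HH[OF assms(1)] nn_HH[OF assms(2)]
  have "close (cnv f g) (cnv (dxf x) (dxf y)) (e/2 + e/2)"
    by (rule cnv_close[OF nns(1) nn_dxf nns(2) nn_dxf x y])
  then have 1: "close (cnv f g) (dxf (x + y)) e" by (simp add: cnv_dxf)
  have "close (cnv g f) (cnv (dxf y) (dxf x)) (e/2 + e/2)"
    by (rule cnv_close[OF nns(2) nn_dxf nns(1) nn_dxf y x])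
  then have 2: "close (cnv g f) (dxf (x + y)) e" by (simp add: cnv_dxf add.commute)
  show "\<exists>k. close (cnv f g) k e \<and> close (cnv g f) k e" using 1 2 by blast
qed

lemma cnv_zero: assumes "f \<in> HH" shows "cnv (dxf 0) f = f"
proof (rule close_approx_eq)
  fix e :: real assume e: "e > 0"
  obtain x where x: "close f (dxf x) e" using HH_approx[OF assms(1), of e] e by auto
  have "close (cnv (dxf 0) f) (cnv (dxf 0) (dxf x)) (0 + e)"
    by (rule cnv_close[OF nn_dxf nn_dxf nn_HH[OF assms] nn_dxf close_refl x])
  then have "close (cnv (dxf 0) f) (dxf x) e" by (simp add: cnv_dxf)
  then show "\<exists>k. close (cnv (dxf 0) f) k e \<and> close f k e" using x by blast
qed

lemma cnv_inv: assumes "f \<in> HH" shows "cnv (ngf f) f = dxf 0"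
proof (rule close_approx_eq)
  fix e :: real assume e: "e > 0"
  obtain x where x: "close f (dxf x) (e/2)" using HH_approx[OF assms(1), of "e/2"] e by auto
  have "close (cnv (ngf f) f) (cnv (ngf (dxf x)) (dxf x)) (e/2 + e/2)"
    by (rule cnv_close[OF nn_ngf[OF nn_HH[OF assms]] nn_ngf[OF nn_dxf] nn_HH[OF assms] nn_dxf close_ngf[OF x] x])
  then have "close (cnv (ngf f) f) (dxf 0) e" by (simp add: cnv_dxf ngf_dxf)
  moreover have "close (dxf 0) (dxf 0) e" by (rule close_mono[OF close_refl]) (use e in simp)
  ultimately show "\<exists>k. close (cnv (ngf f) f) k e \<and> close (dxf 0) k e" by blast
qed

lemma hdist_cnv: assumes "f \<in> HH" "f' \<in> HH" "g \<in> HH" "g' \<in> HH"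
  shows "hdist (cnv f g) (cnv f' g') \<le> hdist f f' + hdist g g'"
  by (rule hdist_le, rule cnv_close[OF nn_HH[OF assms(1)] nn_HH[OF assms(2)] nn_HH[OF assms(3)] nn_HH[OF assms(4)]
       close_hdist[OF assms(1,2)] close_hdist[OF assms(3,4)]])

lemma hdist_ngf: assumes "f \<in> HH" "g \<in> HH"
  shows "hdist (ngf f) (ngf g) \<le> hdist f g"
  by (rule hdist_le, rule close_ngf, rule close_hdist[OF assms])

definition enc :: "('a \<Rightarrow> real) \<Rightarrow> 'a set set" where
  "enc f = {S. \<exists>r>0. S = {y. f y < r}}"

lemma enc_inj: "inj_on enc HH"
proof (rule inj_onI, rule ccontr)
  fix f g assume f: "f \<in> HH" and g: "g \<in> HH" and eq: "enc f = enc g" and ne: "f \<noteq> g"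
  then obtain y0 where y0: "f y0 \<noteq> g y0" by auto
  define t where "t = \<bar>f y0 - g y0\<bar> / 3"
  have t: "t > 0" using y0 by (simp add: t_def)
  have t3: "3 * t = \<bar>f y0 - g y0\<bar>" by (simp add: t_def)
  have "{y. f y < t} \<in> enc f" unfolding enc_def using t by blast
  then obtain r where r: "r > 0" "{y. f y < t} = {y. g y < r}" using eq unfolding enc_def by auto
  obtain y1 where y1: "g y1 \<le> min r t / 2" using HH_inf[OF g, of "min r t / 2"] r t by auto
  have "g y1 < r" using y1 r t by (smt (verit) field_sum_of_halves min.cobounded1)
  then have "f y1 < t" using r(2) by blast
  have "g y1 < t" using y1 r t by (smt (verit) field_sum_of_halves min.cobounded2)
  have a: "f y0 \<le> f y1 + D0 (y1 - y0)" by (rule HH_lip[OF f])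
  have b: "D0 (y1 - y0) \<le> g y1 + g y0" by (rule HH_tri[OF g])
  have c: "g y0 \<le> g y1 + D0 (y1 - y0)" by (rule HH_lip[OF g])
  have d: "D0 (y1 - y0) \<le> f y1 + f y0" by (rule HH_tri[OF f])
  have "\<bar>f y0 - g y0\<bar> < 2 * t" using a b c d \<open>f y1 < t\<close> \<open>g y1 < t\<close> by linarith
  then show False using t t3 by linarith
qed

end


context cps
begin

definition MM :: "'a set set set" where "MM = enc ` HH"
definition dec :: "'a set set \<Rightarrow> ('a \<Rightarrow> real)" where "dec a = inv_into HH enc a"
definition Dm :: "'a set set \<Rightarrow> 'a set set \<Rightarrow> real" where
  "Dm a b = (if a \<in> MM \<and> b \<in> MM then hdist (dec a) (dec b) else 0)"
definition iot :: "'a \<Rightarrow> 'a set set" where "iot x = enc (dxf x)"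
definition addM :: "'a set set \<Rightarrow> 'a set set \<Rightarrow> 'a set set" where
  "addM a b = enc (cnv (dec a) (dec b))"
definition negM :: "'a set set \<Rightarrow> 'a set set" where "negM a = enc (ngf (dec a))"
definition zM :: "'a set set" where "zM = iot 0"

lemma dec_enc [simp]: "f \<in> HH \<Longrightarrow> dec (enc f) = f"
  unfolding dec_def by (rule inv_into_f_f[OF enc_inj])

lemma enc_in [simp]: "f \<in> HH \<Longrightarrow> enc f \<in> MM"
  unfolding MM_def by blast

lemma dec_in: "a \<in> MM \<Longrightarrow> dec a \<in> HH"
  unfolding MM_def by auto

lemma enc_dec: "a \<in> MM \<Longrightarrow> enc (dec a) = a"
  unfolding MM_def by auto

lemma iot_in [simp]: "iot x \<in> MM"
  unfolding iot_def by (simp add: dxf_in_HH)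

lemma dec_iot [simp]: "dec (iot x) = dxf x"
  unfolding iot_def by (simp add: dxf_in_HH)

lemma Dm_enc: "f \<in> HH \<Longrightarrow> g \<in> HH \<Longrightarrow> Dm (enc f) (enc g) = hdist f g"
  unfolding Dm_def by simp

lemma Dm_iot: "Dm (iot x) (iot y) = D0 (x - y)"
  unfolding Dm_def by (simp add: hdist_dxf)

lemma Dm_metric: "Metric_space MM Dm"
proof
  fix x y show "0 \<le> Dm x y" unfolding Dm_def using hdist_nonneg dec_in by auto
next
  fix x y show "Dm x y = Dm y x" unfolding Dm_def using hdist_commute by auto
next
  fix x y assume "x \<in> MM" "y \<in> MM"
  then show "Dm x y = 0 \<longleftrightarrow> x = y" unfolding Dm_def using hdist_zero dec_in enc_dec by metis
next
  fix x y z assume "x \<in> MM" "y \<in> MM" "z \<in> MM"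
  then show "Dm x z \<le> Dm x y + Dm y z" unfolding Dm_def using hdist_triangle dec_in by auto
qed

lemma addM_in [simp]: "a \<in> MM \<Longrightarrow> b \<in> MM \<Longrightarrow> addM a b \<in> MM"
  unfolding addM_def by (simp add: cnv_HH dec_in)

lemma negM_in [simp]: "a \<in> MM \<Longrightarrow> negM a \<in> MM"
  unfolding negM_def by (simp add: ngf_HH dec_in)

lemma zM_in [simp]: "zM \<in> MM"
  unfolding zM_def by simp

lemma addM_iot: "addM (iot x) (iot y) = iot (x + y)"
  unfolding addM_def iot_def by (simp add: dxf_in_HH cnv_dxf)

lemma negM_iot: "negM (iot x) = iot (- x)"
  unfolding negM_def iot_def by (simp add: dxf_in_HH ngf_dxf)

lemma addM_assoc: "a \<in> MM \<Longrightarrow> b \<in> MM \<Longrightarrow> c \<in> MM \<Longrightarrow> addM (addM a b) c = addM a (addM b c)"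
  unfolding addM_def by (simp add: cnv_HH dec_in cnv_assoc)

lemma addM_comm: "a \<in> MM \<Longrightarrow> b \<in> MM \<Longrightarrow> addM a b = addM b a"
  unfolding addM_def by (simp add: dec_in cnv_comm)

lemma addM_zero: "a \<in> MM \<Longrightarrow> addM zM a = a"
  unfolding addM_def zM_def by (simp add: dec_in cnv_zero enc_dec)

lemma addM_inv: "a \<in> MM \<Longrightarrow> addM (negM a) a = zM"
  unfolding addM_def negM_def zM_def iot_def by (simp add: dec_in ngf_HH cnv_inv)

lemma Dm_addM: "a \<in> MM \<Longrightarrow> a' \<in> MM \<Longrightarrow> b \<in> MM \<Longrightarrow> b' \<in> MM \<Longrightarrow>
    Dm (addM a b) (addM a' b') \<le> Dm a a' + Dm b b'"
  unfolding Dm_def addM_def by (simp add: cnv_HH dec_in hdist_cnv)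

lemma Dm_negM: "a \<in> MM \<Longrightarrow> b \<in> MM \<Longrightarrow> Dm (negM a) (negM b) \<le> Dm a b"
  unfolding Dm_def negM_def by (simp add: ngf_HH dec_in hdist_ngf)

lemma MM_approx: assumes "a \<in> MM" "e > 0" shows "\<exists>x. Dm a (iot x) \<le> e"
proof -
  obtain x where "close (dec a) (dxf x) e" using HH_approx[OF dec_in[OF assms(1)] assms(2)] by auto
  then have "hdist (dec a) (dxf x) \<le> e" by (rule hdist_le)
  then show ?thesis unfolding Dm_def using assms by auto
qed

end

sublocale cps \<subseteq> Mt: Metric_space "MM" "Dm"
  by (rule Dm_metric)

context cps
begin

lemma mcomplete: "Mt.mcomplete"
  unfolding Mt.mcomplete_def
proof (intro allI impI)
  fix \<sigma> assume cs: "Mt.MCauchy \<sigma>"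
  define f where "f n = dec (\<sigma> n)" for n
  have sM: "\<sigma> n \<in> MM" for n using cs unfolding Mt.MCauchy_def by auto
  have fH: "f n \<in> HH" for n unfolding f_def using sM dec_in by auto
  have Dmf: "Dm (\<sigma> n) (\<sigma> m) = hdist (f n) (f m)" for n m
    unfolding Dm_def f_def using sM by auto
  have cauchy: "\<exists>N. \<forall>n m. N \<le> n \<longrightarrow> N \<le> m \<longrightarrow> hdist (f n) (f m) < e" if "e > 0" for e
    using cs that unfolding Mt.MCauchy_def Dmf by blast
  have pt: "Cauchy (\<lambda>n. f n y)" for y
  proof (rule metric_CauchyI)
    fix e :: real assume "e > 0"
    then obtain N where N: "\<forall>n m. N \<le> n \<longrightarrow> N \<le> m \<longrightarrow> hdist (f n) (f m) < e" using cauchy by blast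
    show "\<exists>M. \<forall>m\<ge>M. \<forall>n\<ge>M. dist (f m y) (f n y) < e"
    proof (intro exI allI impI)
      fix m n assume "N \<le> m" "N \<le> n"
      then show "dist (f m y) (f n y) < e" using N hdist_ge[OF fH[of m] fH[of n], of y] by (simp add: dist_real_def) (meson le_less_trans)
    qed
  qed
  define \<phi> where "\<phi> y = lim (\<lambda>n. f n y)" for y
  have lim: "(\<lambda>n. f n y) \<longlonglongrightarrow> \<phi> y" for y
    unfolding \<phi>_def using pt convergent_LIMSEQ_iff Cauchy_convergent_iff by blast
  have unif: "\<exists>N. \<forall>n\<ge>N. close (f n) \<phi> e" if ep: "e > 0" for e
  proof -
    obtain N where N: "\<forall>n m. N \<le> n \<longrightarrow> N \<le> m \<longrightarrow> hdist (f n) (f m) < e" using cauchy ep by blast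
    have "close (f n) \<phi> e" if nN: "N \<le> n" for n
      unfolding close_def
    proof
      fix y
      have "(\<lambda>m. \<bar>f n y - f m y\<bar>) \<longlonglongrightarrow> \<bar>f n y - \<phi> y\<bar>"
        by (intro tendsto_intros lim)
      moreover have "\<forall>m\<ge>N. \<bar>f n y - f m y\<bar> \<le> e"
      proof (intro allI impI)
        fix m assume "N \<le> m"
        then have "hdist (f n) (f m) < e" using N nN by blast
        then show "\<bar>f n y - f m y\<bar> \<le> e" using hdist_ge[OF fH[of n] fH[of m], of y] by linarith
      qed
      ultimately show "\<bar>f n y - \<phi> y\<bar> \<le> e" by (rule LIMSEQ_le_const2[OF _ exI])
    qed
    then show ?thesis by blast
  qed
  have \<phi>H: "\<phi> \<in> HH"
  proof (rule HH_closed_lim)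
    fix e :: real assume "e > 0"
    then obtain N where "\<forall>n\<ge>N. close (f n) \<phi> e" using unif by blast
    then show "\<exists>g\<in>HH. close \<phi> g e" using fH close_sym by blast
  qed
  show "\<exists>x. limitin Mt.mtopology \<sigma> x sequentially"
  proof (intro exI)
    show "limitin Mt.mtopology \<sigma> (enc \<phi>) sequentially"
      unfolding Mt.limitin_metric
    proof (intro conjI allI impI)
      show "enc \<phi> \<in> MM" using \<phi>H by simp
      fix e :: real assume "e > 0"
      then obtain N where N: "\<forall>n\<ge>N. close (f n) \<phi> (e/2)" using unif[of "e/2"] by auto
      show "\<forall>\<^sub>F n in sequentially. \<sigma> n \<in> MM \<and> Dm (\<sigma> n) (enc \<phi>) < e"
      proof (rule eventually_sequentiallyI[of N])
        fix n assume "N \<le> n"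
        have "Dm (\<sigma> n) (enc \<phi>) = hdist (f n) \<phi>"
          using Dm_enc[OF fH[of n] \<phi>H] enc_dec[OF sM] unfolding f_def by simp
        also have "\<dots> \<le> e/2" using N \<open>N \<le> n\<close> hdist_le by blast
        finally show "\<sigma> n \<in> MM \<and> Dm (\<sigma> n) (enc \<phi>) < e" using sM \<open>e > 0\<close> by simp
      qed
    qed
  qed
qed

end


lemma (in Metric_space) mtotally_bounded_from_cover:
  assumes SM: "S \<subseteq> M" and cov: "\<And>e. e > 0 \<Longrightarrow> \<exists>K. finite K \<and> K \<subseteq> M \<and> S \<subseteq> (\<Union>x\<in>K. mball x e)"
  shows "mtotally_bounded S"
  unfolding mtotally_bounded_def
proof (intro allI impI)
  fix e :: real assume e: "e > 0"
  obtain K where K: "finite K" "K \<subseteq> M" "S \<subseteq> (\<Union>x\<in>K. mball x (e/2))" using cov[of "e/2"] e by auto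
  define K' where "K' = {k\<in>K. S \<inter> mball k (e/2) \<noteq> {}}"
  define g where "g k = (SOME s. s \<in> S \<inter> mball k (e/2))" for k
  have g: "g k \<in> S \<inter> mball k (e/2)" if "k \<in> K'" for k
  proof -
    have "\<exists>s. s \<in> S \<inter> mball k (e/2)" using that unfolding K'_def by blast
    then show ?thesis unfolding g_def by (rule someI_ex)
  qed
  show "\<exists>K. finite K \<and> K \<subseteq> S \<and> S \<subseteq> (\<Union>x\<in>K. mball x e)"
  proof (intro exI conjI)
    show "finite (g ` K')" using K(1) unfolding K'_def by simp
    show "g ` K' \<subseteq> S" using g by blast
    show "S \<subseteq> (\<Union>x\<in>g ` K'. mball x e)"
    proof
      fix s assume s: "s \<in> S"
      then obtain k where k: "k \<in> K" "s \<in> mball k (e/2)" using K(3) by blast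
      then have kK': "k \<in> K'" unfolding K'_def using s by blast
      have gk: "g k \<in> S" "g k \<in> mball k (e/2)" using g[OF kK'] by auto
      have kM: "k \<in> M" using k K(2) by blast
      have gM: "g k \<in> M" using gk SM by blast
      have sM: "s \<in> M" using s SM by blast
      have "d (g k) s \<le> d (g k) k + d k s" by (rule triangle[OF gM kM sM])
      also have "\<dots> < e"
      proof -
        have "d k (g k) < e/2" "d k s < e/2" using gk(2) k(2) by auto
        then show ?thesis using commute[of "g k" k] by linarith
      qed
      finally have "s \<in> mball (g k) e" using gM sM by simp
      then show "s \<in> (\<Union>x\<in>g ` K'. mball x e)" using kK' by blast
    qed
  qed
qed

context cps
begin

lemma cball_tb: assumes "0 < \<rho>" "\<rho> < C" shows "Mt.mtotally_bounded (Mt.mcball (iot c) \<rho>)"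
proof (rule Mt.mtotally_bounded_from_cover)
  show "Mt.mcball (iot c) \<rho> \<subseteq> MM" by (rule Mt.mcball_subset_mspace)
  fix e :: real assume e: "e > 0"
  define \<delta> where "\<delta> = min (e/4) ((C - \<rho>)/4)"
  have d1: "\<delta> \<le> e/4" unfolding \<delta>_def by (rule min.cobounded1)
  have d2: "\<delta> \<le> (C - \<rho>)/4" unfolding \<delta>_def by (rule min.cobounded2)
  have d2': "4 * \<delta> \<le> C - \<rho>" using d2 by (simp add: field_simps)
  have d0: "\<delta> > 0" unfolding \<delta>_def using e assms by simp
  have dC: "\<rho> + 3 * \<delta> < C" "\<delta> < C" using d2' d0 assms by linarith+
  obtain Kd where Kd: "compact Kd" "sumset (P \<delta>) Kd = UNIV"
    using A4[OF d0 dC(2)] unfolding relatively_dense_def by blast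
  define F where "F = P (\<rho> + 3 * \<delta>) \<inter> Kd"
  have fin: "finite F" unfolding F_def using A2[of "\<rho> + 3 * \<delta>"] Kd(1) dC d0 assms
    unfolding locally_finite_set_def by auto
  show "\<exists>K. finite K \<and> K \<subseteq> MM \<and> Mt.mcball (iot c) \<rho> \<subseteq> (\<Union>x\<in>K. Mt.mball x e)"
  proof (intro exI conjI)
    show "finite (iot ` (\<lambda>k. c + k) ` F)" using fin by simp
    show "iot ` (\<lambda>k. c + k) ` F \<subseteq> MM" by auto
    show "Mt.mcball (iot c) \<rho> \<subseteq> (\<Union>x\<in>iot ` (\<lambda>k. c + k) ` F. Mt.mball x e)"
    proof
      fix a assume a: "a \<in> Mt.mcball (iot c) \<rho>"
      then have aM: "a \<in> MM" and ac: "Dm (iot c) a \<le> \<rho>" by auto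
      obtain x where x: "Dm a (iot x) \<le> \<delta>" using MM_approx[OF aM d0] by auto
      have "Dm (iot c) (iot x) \<le> Dm (iot c) a + Dm a (iot x)" using Mt.triangle aM by simp
      then have "D0 (c - x) \<le> \<rho> + \<delta>" using ac x Dm_iot by simp
      then have "D0 (x - c) < \<rho> + 2 * \<delta>" using D0_diff_commute d0 by simp
      then have xc: "x - c \<in> P (\<rho> + 2 * \<delta>)" by (rule D0_lt) (use dC d0 in linarith)
      have "x - c \<in> sumset (P \<delta>) Kd" using Kd(2) by simp
      then obtain p k where pk: "p \<in> P \<delta>" "k \<in> Kd" "x - c = p + k" by (auto elim: sumsetE)
      have "(x - c) + (- p) \<in> P (\<rho> + 2 * \<delta> + \<delta>)"
        by (rule Padd) (use xc Pneg[OF d0 dC(2) pk(1)] d0 assms dC in auto)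
      moreover have "(x - c) + (- p) = k" using pk(3) by (simp add: algebra_simps)
      ultimately have kF: "k \<in> F" unfolding F_def using pk(2) by (simp add: algebra_simps)
      have "Dm (iot (c + k)) a \<le> Dm (iot (c + k)) (iot x) + Dm (iot x) a" using Mt.triangle aM by simp
      also have "Dm (iot (c + k)) (iot x) = D0 (- p)"
      proof -
        have "x = p + k + c" using pk(3) by (metis diff_add_cancel)
        then have "c + k - x = - p" by (simp add: algebra_simps)
        then show ?thesis by (simp add: Dm_iot)
      qed
      also have "D0 (- p) \<le> \<delta>" using D0_uminus D0_le[OF d0 dC(2) pk(1)] by simp
      also have "Dm (iot x) a \<le> \<delta>" using x Mt.commute by simp
      finally have "Dm (iot (c + k)) a < e" using d1 d0 by linarith
      then show "a \<in> (\<Union>x\<in>iot ` (\<lambda>k. c + k) ` F. Mt.mball x e)" using kF aM by force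
    qed
  qed
qed

lemma cball_compact: assumes "0 < \<rho>" "\<rho> < C" shows "compactin Mt.mtopology (Mt.mcball (iot c) \<rho>)"
proof -
  have "compactin Mt.mtopology (Mt.mtopology closure_of Mt.mcball (iot c) \<rho>)"
    using Mt.mtotally_bounded_eq_compact_closure_of[OF mcomplete] cball_tb[OF assms] by blast
  then show ?thesis by (simp add: closure_of_closedin)
qed

lemma lc_T: "locally_compact_space Mt.mtopology"
  unfolding locally_compact_space_def
proof
  fix a assume "a \<in> topspace Mt.mtopology"
  then have aM: "a \<in> MM" by simp
  define r where "r = C/2"
  have r: "0 < r" "r < C" using C by (auto simp: r_def)
  obtain x where x: "Dm a (iot x) \<le> r/2" using MM_approx[OF aM, of "r/2"] r by auto
  show "\<exists>U K. openin Mt.mtopology U \<and> compactin Mt.mtopology K \<and> a \<in> U \<and> U \<subseteq> K"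
  proof (intro exI conjI)
    show "openin Mt.mtopology (Mt.mball a (r/2))" by simp
    show "compactin Mt.mtopology (Mt.mcball (iot x) r)" by (rule cball_compact[OF r])
    show "a \<in> Mt.mball a (r/2)" using aM r by simp
    show "Mt.mball a (r/2) \<subseteq> Mt.mcball (iot x) r"
    proof
      fix b assume b: "b \<in> Mt.mball a (r/2)"
      then have bM: "b \<in> MM" and "Dm a b < r/2" by auto
      moreover have "Dm (iot x) b \<le> Dm (iot x) a + Dm a b" using Mt.triangle aM bM by simp
      ultimately show "b \<in> Mt.mcball (iot x) r" using x Mt.commute[of a "iot x"] by simp
    qed
  qed
qed

lemma lca: "lca_group_on Mt.mtopology addM negM zM"
  unfolding lca_group_on_def Mt.topspace_mtopology
proof (intro conjI ballI)
  show "zM \<in> MM" by simp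
  show "continuous_map (prod_topology Mt.mtopology Mt.mtopology) Mt.mtopology (\<lambda>p. addM (fst p) (snd p))"
    unfolding Mt.continuous_map_to_metric
  proof (intro ballI allI impI)
    fix p and e :: real assume p: "p \<in> topspace (prod_topology Mt.mtopology Mt.mtopology)" and e: "e > 0"
    obtain a b where ab: "p = (a, b)" "a \<in> MM" "b \<in> MM" using p by (cases p) auto
    show "\<exists>U. openin (prod_topology Mt.mtopology Mt.mtopology) U \<and> p \<in> U \<and>
            (\<forall>y\<in>U. addM (fst y) (snd y) \<in> Mt.mball (addM (fst p) (snd p)) e)"
    proof (intro exI conjI ballI)
      show "openin (prod_topology Mt.mtopology Mt.mtopology) (Mt.mball a (e/2) \<times> Mt.mball b (e/2))"
        by (simp add: openin_prod_Times_iff)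
      show "p \<in> Mt.mball a (e/2) \<times> Mt.mball b (e/2)" using ab e by simp
      fix y assume "y \<in> Mt.mball a (e/2) \<times> Mt.mball b (e/2)"
      then obtain a' b' where y: "y = (a', b')" "a' \<in> MM" "b' \<in> MM" "Dm a a' < e/2" "Dm b b' < e/2" by auto
      have "Dm (addM a b) (addM a' b') \<le> Dm a a' + Dm b b'" by (rule Dm_addM) (use ab y in auto)
      then show "addM (fst y) (snd y) \<in> Mt.mball (addM (fst p) (snd p)) e" using ab y by simp
    qed
  qed
  show "continuous_map Mt.mtopology Mt.mtopology negM"
    unfolding Mt.continuous_map_to_metric
  proof (intro ballI allI impI)
    fix a and e :: real assume a: "a \<in> topspace Mt.mtopology" and e: "e > 0"
    then have aM: "a \<in> MM" by simp
    show "\<exists>U. openin Mt.mtopology U \<and> a \<in> U \<and> (\<forall>y\<in>U. negM y \<in> Mt.mball (negM a) e)"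
    proof (intro exI conjI ballI)
      show "openin Mt.mtopology (Mt.mball a e)" by simp
      show "a \<in> Mt.mball a e" using aM e by simp
      fix y assume "y \<in> Mt.mball a e"
      then have "y \<in> MM" "Dm a y < e" by auto
      then show "negM y \<in> Mt.mball (negM a) e" using Dm_negM[OF aM \<open>y \<in> MM\<close>] aM by simp
    qed
  qed
  show "Hausdorff_space Mt.mtopology" by (rule Mt.Hausdorff_space_mtopology)
  show "locally_compact_space Mt.mtopology" by (rule lc_T)
  fix x y w assume xyw: "x \<in> MM" "y \<in> MM" "w \<in> MM"
  show "addM x y \<in> MM" using xyw by simp
  show "negM x \<in> MM" using xyw by simp
  show "addM (addM x y) w = addM x (addM y w)" using xyw by (rule addM_assoc)
  show "addM x y = addM y x" using xyw by (intro addM_comm)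
  show "addM zM x = x" using xyw by (intro addM_zero)
  show "addM (negM x) x = zM" using xyw by (intro addM_inv)
qed

end


context cps
begin

definition LL :: "('a \<times> 'a set set) set" where "LL = range (\<lambda>x. (x, iot x))"

lemma G_facts:
  "continuous_on UNIV (\<lambda>p::'a \<times> 'a. fst p + snd p)"
  "Hausdorff_space (euclidean :: 'a topology)"
  "locally_compact_space (euclidean :: 'a topology)"
  using G unfolding sigma_compact_lca_group_def by auto

lemma compact_translate: fixes K :: "'a set" and a :: 'a assumes "compact K" shows "compact ((\<lambda>k. k + a) ` K)"
proof -
  have c1: "continuous_on UNIV (\<lambda>k::'a. (k, a))" by (intro continuous_intros)
  have "continuous_on ((\<lambda>k::'a. (k, a)) ` UNIV) (\<lambda>p::'a \<times> 'a. fst p + snd p)"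
    using G_facts(1) continuous_on_subset by blast
  then have "continuous_on UNIV ((\<lambda>p::'a \<times> 'a. fst p + snd p) \<circ> (\<lambda>k. (k, a)))"
    by (rule continuous_on_compose[OF c1])
  then have "continuous_on UNIV (\<lambda>k. k + a)" by (simp add: o_def)
  then have "continuous_on K (\<lambda>k. k + a)" by (rule continuous_on_subset) simp
  then show ?thesis by (rule compact_continuous_image[OF _ assms])
qed

lemma compact_translate': fixes K :: "'a set" and a :: 'a assumes "compact K" shows "compact ((\<lambda>k. k - a) ` K)"
  using compact_translate[OF assms, of "- a"] by simp

lemma fst_LL: "fst ` LL = UNIV"
  unfolding LL_def image_image by simp

lemma discrete_LL: "\<forall>p\<in>LL. \<exists>U. openin (prod_topology euclidean Mt.mtopology) U \<and> U \<inter> LL = {p}"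
proof
  fix p assume "p \<in> LL"
  then obtain x where px: "p = (x, iot x)" unfolding LL_def by auto
  have "\<exists>U K. openin euclidean U \<and> compactin euclidean K \<and> x \<in> U \<and> U \<subseteq> K"
    using G_facts(3) unfolding locally_compact_space_def by simp
  then obtain U0 K0 where UK: "openin euclidean U0" "compactin euclidean K0" "x \<in> U0" "U0 \<subseteq> K0"
    by blast
  define r where "r = C/2"
  have r: "0 < r" "r < C" using C by (auto simp: r_def)
  have "compact K0" using UK(2) by simp
  then have K1: "compact ((\<lambda>k. k - x) ` K0)" by (rule compact_translate')
  define S where "S = {y \<in> K0. y - x \<in> P r}"
  have "S \<subseteq> (\<lambda>q. q + x) ` (P r \<inter> (\<lambda>k. k - x) ` K0)"
  proof
    fix y assume "y \<in> S"
    then have "y - x \<in> P r \<inter> (\<lambda>k. k - x) ` K0" "y = (y - x) + x" unfolding S_def by auto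
    then show "y \<in> (\<lambda>q. q + x) ` (P r \<inter> (\<lambda>k. k - x) ` K0)" by blast
  qed
  moreover have "finite (P r \<inter> (\<lambda>k. k - x) ` K0)"
    using A2[OF r] K1 unfolding locally_finite_set_def by blast
  ultimately have finS: "finite S" by (rule finite_subset[OF _ finite_imageI])
  have cl: "closedin euclidean (S - {x})"
    using Hausdorff_imp_t1_space[OF G_facts(2)] finS unfolding t1_space_closedin_finite by auto
  show "\<exists>U. openin (prod_topology euclidean Mt.mtopology) U \<and> U \<inter> LL = {p}"
  proof (intro exI conjI)
    show "openin (prod_topology euclidean Mt.mtopology) ((U0 - (S - {x})) \<times> Mt.mball (iot x) r)"
      unfolding openin_prod_Times_iff using UK(1) cl by (auto intro: openin_diff)
    show "(U0 - (S - {x})) \<times> Mt.mball (iot x) r \<inter> LL = {p}"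
    proof
      show "{p} \<subseteq> (U0 - (S - {x})) \<times> Mt.mball (iot x) r \<inter> LL"
        using px UK(3) r \<open>p \<in> LL\<close> by auto
      show "(U0 - (S - {x})) \<times> Mt.mball (iot x) r \<inter> LL \<subseteq> {p}"
      proof
        fix q assume q: "q \<in> (U0 - (S - {x})) \<times> Mt.mball (iot x) r \<inter> LL"
        then obtain y where qy: "q = (y, iot y)" unfolding LL_def by auto
        have yU: "y \<in> U0" "y \<notin> S - {x}" using q qy by auto
        have "Dm (iot x) (iot y) < r" using q qy by auto
        then have "D0 (x - y) < r" by (simp add: Dm_iot)
        then have "x - y \<in> P r" using r by (intro D0_lt) auto
        then have "- (x - y) \<in> P r" using Pneg r by blast
        then have "y \<in> S" unfolding S_def using yU UK(4) by auto
        then have "y = x" using yU by blast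
        then show "q \<in> {p}" using qy px by simp
      qed
    qed
  qed
qed

lemma addM_cancel: "a \<in> MM \<Longrightarrow> h \<in> MM \<Longrightarrow> addM a (addM h (negM a)) = h"
proof -
  assume a: "a \<in> MM" and h: "h \<in> MM"
  have "addM a (addM h (negM a)) = addM a (addM (negM a) h)" using a h addM_comm by simp
  also have "\<dots> = addM (addM a (negM a)) h" using a h addM_assoc by simp
  also have "addM a (negM a) = zM" using addM_comm addM_inv a by simp
  finally show ?thesis using addM_zero h by simp
qed

lemma cocompact_LL: "\<exists>K. compactin (prod_topology euclidean Mt.mtopology) K \<and>
        (\<forall>q \<in> UNIV \<times> topspace Mt.mtopology. \<exists>l\<in>LL. \<exists>k\<in>K. q = (fst l + fst k, addM (snd l) (snd k)))"
proof -
  define s where "s = C/4"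
  have s: "0 < s" "s < C" "2 * s < C" using C by (auto simp: s_def)
  obtain Kg where Kg: "compact Kg" "sumset (P s) Kg = UNIV"
    using A4[OF s(1,2)] unfolding relatively_dense_def by blast
  show ?thesis
  proof (intro exI conjI ballI)
    show "compactin (prod_topology euclidean Mt.mtopology) (Kg \<times> Mt.mcball zM (2 * s))"
    proof -
      have "compactin Mt.mtopology (Mt.mcball (iot 0) (2 * s))" by (rule cball_compact) (use s in auto)
      then show ?thesis unfolding compactin_Times zM_def using Kg(1) by auto
    qed
    fix q :: "'a \<times> 'a set set" assume q: "q \<in> UNIV \<times> topspace Mt.mtopology"
    then obtain g h where gh: "q = (g, h)" "h \<in> MM" by auto
    obtain y where y: "Dm h (iot y) \<le> s" using MM_approx[OF gh(2) s(1)] by auto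
    have "g - y \<in> sumset (P s) Kg" using Kg(2) by simp
    then obtain p k where pk: "p \<in> P s" "k \<in> Kg" "g - y = p + k" by (auto elim: sumsetE)
    define x where "x = y + p"
    have gx: "g = x + k" using pk(3) unfolding x_def by (metis add.assoc diff_add_cancel add.commute)
    have Dxy: "Dm (iot x) (iot y) \<le> s"
      using Dm_iot[of x y] D0_le[OF s(1,2) pk(1)] unfolding x_def by simp
    have "Dm zM (addM h (negM (iot x))) = Dm (addM (iot x) (negM (iot x))) (addM h (negM (iot x)))"
      using addM_comm addM_inv by simp
    also have "\<dots> \<le> Dm (iot x) h + Dm (negM (iot x)) (negM (iot x))"
      using gh(2) by (intro Dm_addM) auto
    also have "\<dots> = Dm (iot x) h" by simp
    also have "\<dots> \<le> Dm (iot x) (iot y) + Dm (iot y) h" using gh(2) Mt.triangle by simp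
    also have "\<dots> \<le> 2 * s" using Dxy y Mt.commute[of h "iot y"] by simp
    finally have kk: "(k, addM h (negM (iot x))) \<in> Kg \<times> Mt.mcball zM (2 * s)"
      using pk(2) gh(2) by simp
    have "q = (fst (x, iot x) + fst (k, addM h (negM (iot x))), addM (snd (x, iot x)) (snd (k, addM h (negM (iot x)))))"
      using gh gx addM_cancel[of "iot x" h] by simp
    moreover have "(x, iot x) \<in> LL" unfolding LL_def by simp
    ultimately show "\<exists>l\<in>LL. \<exists>k\<in>Kg \<times> Mt.mcball zM (2 * s). q = (fst l + fst k, addM (snd l) (snd k))"
      using kk by blast
  qed
qed

lemma cps_LL: "cut_and_project_scheme Mt.mtopology addM negM zM LL"
  unfolding cut_and_project_scheme_def
proof (intro conjI)
  show "LL \<subseteq> UNIV \<times> topspace Mt.mtopology" unfolding LL_def by auto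
  show "(0, zM) \<in> LL" unfolding LL_def zM_def by auto
  show "\<forall>p\<in>LL. \<forall>q\<in>LL. (fst p + fst q, addM (snd p) (snd q)) \<in> LL"
    unfolding LL_def by (auto simp: addM_iot)
  show "\<forall>p\<in>LL. (- fst p, negM (snd p)) \<in> LL"
    unfolding LL_def by (auto simp: negM_iot)
  show "\<forall>p\<in>LL. \<exists>U. openin (prod_topology euclidean Mt.mtopology) U \<and> U \<inter> LL = {p}"
    by (rule discrete_LL)
  show "\<exists>K. compactin (prod_topology euclidean Mt.mtopology) K \<and>
        (\<forall>q \<in> UNIV \<times> topspace Mt.mtopology. \<exists>l\<in>LL. \<exists>k\<in>K. q = (fst l + fst k, addM (snd l) (snd k)))"
    by (rule cocompact_LL)
  show "inj_on fst LL" unfolding LL_def by (auto intro: inj_onI)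
  show "Mt.mtopology closure_of snd ` LL = topspace Mt.mtopology"
    unfolding Mt.metric_closure_of Mt.topspace_mtopology
  proof (intro set_eqI iffI)
    fix a assume "a \<in> {x \<in> MM. \<forall>r>0. \<exists>y\<in>snd ` LL. y \<in> Mt.mball x r}"
    then show "a \<in> MM" by blast
  next
    fix a assume a: "a \<in> MM"
    have "\<exists>y\<in>snd ` LL. y \<in> Mt.mball a r" if r: "r > 0" for r
    proof -
      obtain x where "Dm a (iot x) \<le> r/2" using MM_approx[OF a, of "r/2"] r by auto
      then have "iot x \<in> Mt.mball a r" using a r by simp
      moreover have "iot x \<in> snd ` LL" unfolding LL_def by (rule image_eqI[of _ snd "(x, iot x)"]) auto
      ultimately show ?thesis by blast
    qed
    then show "a \<in> {x \<in> MM. \<forall>r>0. \<exists>y\<in>snd ` LL. y \<in> Mt.mball x r}" using a by blast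
  qed
qed

lemma star_LL: "star_map LL x = iot x"
proof -
  have "(THE l. l \<in> LL \<and> fst l = x) = (x, iot x)"
    by (rule the_equality) (auto simp: LL_def)
  then show ?thesis unfolding star_map_def by simp
qed

definition P0set where "P0set = \<Inter>{P e' | e'. 0 < e' \<and> e' < C}"

lemma P0set_iff: "q \<in> P0set \<longleftrightarrow> (\<forall>e. 0 < e \<and> e < C \<longrightarrow> q \<in> P e)"
  unfolding P0set_def by blast

lemma P0set_add: "q1 \<in> P0set \<Longrightarrow> q2 \<in> P0set \<Longrightarrow> q1 + q2 \<in> P0set"
proof -
  assume q: "q1 \<in> P0set" "q2 \<in> P0set"
  show ?thesis unfolding P0set_iff
  proof (intro allI impI)
    fix e assume e: "0 < e \<and> e < C"
    have "q1 + q2 \<in> P (e/2 + e/2)" by (rule Padd) (use q e P0set_iff in auto)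
    then show "q1 + q2 \<in> P e" by simp
  qed
qed

lemma main: assumes e: "0 < e" "e < C" shows "model_set (sumset (P e) P0set)"
proof -
  define A where "A = sumset (P e) P0set"
  define W where "W = iot ` A \<union> Mt.mball zM e"
  have zP0: "0 \<in> P0set" unfolding P0set_iff using P0 by blast
  have win: "window_set LL W = A"
  proof -
    have "window_set LL W = {x. iot x \<in> W}" unfolding window_set_def star_LL fst_LL by simp
    also have "\<dots> = A"
    proof (intro set_eqI iffI)
      fix x assume "x \<in> {x. iot x \<in> W}"
      then have "iot x \<in> iot ` A \<or> iot x \<in> Mt.mball zM e" unfolding W_def by blast
      then show "x \<in> A"
      proof
        assume "iot x \<in> iot ` A"
        then obtain a where a: "a \<in> A" "iot x = iot a" by auto
        then obtain p q where pq: "p \<in> P e" "q \<in> P0set" "a = p + q" unfolding A_def by (auto elim: sumsetE)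
        have "D0 (x - a) = 0" using Dm_iot[of x a] a(2) Mt.mdist_zero[of "iot a"] by simp
        then have "x - a \<in> P0set" unfolding P0set_iff D0_eq0_iff by blast
        then have "q + (x - a) \<in> P0set" using pq(2) P0set_add by blast
        moreover have "x = p + (q + (x - a))" using pq(3) by (simp add: algebra_simps)
        ultimately show "x \<in> A" unfolding A_def using pq(1) sumsetI by metis
      next
        assume "iot x \<in> Mt.mball zM e"
        then have "D0 (0 - x) < e" unfolding zM_def by (simp add: Dm_iot)
        then have "D0 x < e" using D0_uminus by simp
        then have "x \<in> P e" using e by (intro D0_lt) auto
        then have "x + 0 \<in> A" unfolding A_def using zP0 sumsetI by blast
        then show "x \<in> A" by simp
      qed
    next
      fix x assume "x \<in> A" then show "x \<in> {x. iot x \<in> W}" unfolding W_def by blast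
    qed
    finally show ?thesis .
  qed
  have WM: "W \<subseteq> topspace Mt.mtopology" unfolding W_def by auto
  have Wc: "W \<subseteq> Mt.mcball zM e"
  proof
    fix b assume "b \<in> W"
    then have "b \<in> iot ` A \<or> b \<in> Mt.mball zM e" unfolding W_def by blast
    then show "b \<in> Mt.mcball zM e"
    proof
      assume "b \<in> iot ` A"
      then obtain p q where pq: "p \<in> P e" "q \<in> P0set" "b = iot (p + q)"
        unfolding A_def by (auto elim: sumsetE)
      have "D0 q = 0" using pq(2) unfolding D0_eq0_iff P0set_iff by blast
      have "Dm zM b = D0 (p + q)" unfolding zM_def pq(3) Dm_iot using D0_uminus[of "p + q"] by simp
      also have "\<dots> \<le> D0 p + D0 q" by (rule D0_add)
      also have "\<dots> \<le> e" using \<open>D0 q = 0\<close> D0_le[OF e pq(1)] by simp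
      finally show ?thesis using pq(3) by simp
    qed auto
  qed
  have "compactin Mt.mtopology (Mt.mtopology closure_of W)"
  proof (rule closed_compactin)
    show "compactin Mt.mtopology (Mt.mcball zM e)" unfolding zM_def by (rule cball_compact[OF e])
    show "Mt.mtopology closure_of W \<subseteq> Mt.mcball zM e" by (rule closure_of_minimal[OF Wc]) simp
  qed simp
  moreover have "Mt.mtopology interior_of W \<noteq> {}"
  proof -
    have "Mt.mball zM e \<subseteq> Mt.mtopology interior_of W"
      by (rule interior_of_maximal) (auto simp: W_def)
    moreover have "zM \<in> Mt.mball zM e" using e by simp
    ultimately show ?thesis by blast
  qed
  ultimately have all: "lca_group_on Mt.mtopology addM negM zM \<and> cut_and_project_scheme Mt.mtopology addM negM zM LL \<and>
        W \<subseteq> topspace Mt.mtopology \<and> compactin Mt.mtopology (Mt.mtopology closure_of W) \<and>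
        Mt.mtopology interior_of W \<noteq> {} \<and> A = window_set LL W"
    using lca cps_LL WM win by simp
  show ?thesis unfolding model_set_def A_def[symmetric]
    by (rule exI[of _ Mt.mtopology], rule exI[of _ addM], rule exI[of _ negM], rule exI[of _ zM],
        rule exI[of _ LL], rule exI[of _ W], rule all)
qed

end

theorem corollary2p10:
  fixes P :: "real \<Rightarrow> 'a::{topological_space, ab_group_add} set" and C :: real
  assumes G: "sigma_compact_lca_group TYPE('a)"
    and C: "C > 0"
    and A1: "\<And>e. 0 < e \<Longrightarrow> e < C \<Longrightarrow> 0 \<in> P e \<and> uminus ` P e = P e"
    and A2: "\<And>e. 0 < e \<Longrightarrow> e < C \<Longrightarrow> locally_finite_set (P e)"
    and A3: "\<And>e e'. 0 < e \<Longrightarrow> 0 < e' \<Longrightarrow> e + e' < C \<Longrightarrow> sumset (P e) (P e') \<subseteq> P (e + e')"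
    and A4: "\<And>e. 0 < e \<Longrightarrow> e < C \<Longrightarrow> relatively_dense (P e)"
  shows "(\<forall>e. 0 < e \<and> e < C \<longrightarrow> model_set (sumset (P e) (\<Inter>{P e' | e'. 0 < e' \<and> e' < C}))) \<and>
         (\<Inter>{P e' | e'. 0 < e' \<and> e' < C} = {0} \<longrightarrow> (\<forall>e. 0 < e \<and> e < C \<longrightarrow> model_set (P e)))"
proof -
  interpret cps P C using assms by (unfold_locales) auto
  have m: "model_set (sumset (P e) (\<Inter>{P e' | e'. 0 < e' \<and> e' < C}))" if "0 < e" "e < C" for e
    using main[OF that] unfolding P0set_def .
  have s0: "sumset A {0} = A" for A :: "'a set" unfolding sumset_def by auto
  show ?thesis
  proof (intro conjI impI allI)
    fix e :: real assume "0 < e \<and> e < C"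
    then show "model_set (sumset (P e) (\<Inter>{P e' | e'. 0 < e' \<and> e' < C}))" using m by blast
  next
    fix e :: real assume z: "\<Inter>{P e' | e'. 0 < e' \<and> e' < C} = {0}" and "0 < e \<and> e < C"
    then have "model_set (sumset (P e) (\<Inter>{P e' | e'. 0 < e' \<and> e' < C}))" using m by blast
    then show "model_set (P e)" unfolding z s0 .
  qed
qed


end
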